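(* Let $f\in C^1(\mathbb{R})$ with $f(0)=0$, $m>0$, $\omega\in(0,m)$, and let $(v,u)$ be real-valued, exponentially decaying solutions of $\omega v=\partial_x u+[m-f(v^2-u^2)]v$, $\omega u=-\partial_x v-[m-f(v^2-u^2)]u$ on $\mathbb{R}$. Let $$\mathcal{A}_\omega=\begin{pmatrix}0&L_-(\omega)\\-L_+(\omega)&0\end{pmatrix},\quad L_-(\omega)=\begin{pmatrix}m-f(\tau)-\omega&\partial_x\\-\partial_x&-m+f(\tau)-\omega\end{pmatrix},\quad L_+(\omega)=L_-(\omega)-2f'(\tau)\begin{pmatrix}v^2&-vu\\-vu&u^2\end{pmatrix},$$ with $\tau=v^2-u^2$, acting on $L^2(\mathbb{R},\mathbb{C}^4)$. Then $\pm2\omega i$ are eigenvalues of $\mathcal{A}_\omega$ (with eigenfunctions in $H^1(\mathbb{R},\mathbb{C}^4)$), for any such nonlinearity $f$.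
   Context: $\mathcal{A}_\omega$ is the linearization of the 1D Soler model $i\partial_t\psi_1=\partial_x\psi_2+(m-f(|\psi_1|^2-|\psi_2|^2))\psi_1$, $i\partial_t\psi_2=-\partial_x\psi_1-(m-f(|\psi_1|^2-|\psi_2|^2))\psi_2$ at the solitary wave $(v,u)^Te^{-i\omega t}$, written for $R=(\mathrm{Re}\rho,\mathrm{Im}\rho)\in\mathbb{R}^4$ where $\psi=((v,u)^T+\rho)e^{-i\omega t}$, and complexified. *)

theory Defs
  imports "HOL-Analysis.Analysis"
begin

text \<open>The linearized operator A_omega applied to a function
  Psi = (Psi1,Psi2,Psi3,Psi4) : R -> C^4 (components ordered as
  (Re rho1, Re rho2, Im rho1, Im rho2), complexified), evaluated at x.
  A_omega = [[0, L_-],[-L_+, 0]], where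
  L_-(a,b) = ((m - f tau - omega) a + b', -a' + (-m + f tau - omega) b),
  L_+ = L_- - 2 f'(tau) [[v^2, -v u],[-v u, u^2]], tau = v^2 - u^2.
  Here fd is the derivative of f.\<close>

definition A_omega ::
  "(real \<Rightarrow> real) \<Rightarrow> (real \<Rightarrow> real) \<Rightarrow> real \<Rightarrow> real \<Rightarrow>
   (real \<Rightarrow> real) \<Rightarrow> (real \<Rightarrow> real) \<Rightarrow> (real \<Rightarrow> complex^4) \<Rightarrow> real \<Rightarrow> complex^4"
where
  "A_omega f fd m \<omega> v u \<Psi> x =
    (let P = \<Psi> x; D = vector_derivative \<Psi> (at x);
         t = (v x)^2 - (u x)^2;
         c = complex_of_real (m - f t);
         w = complex_of_real \<omega>;
         g = complex_of_real (2 * fd t);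
         vv = complex_of_real ((v x)^2);
         uu = complex_of_real ((u x)^2);
         vu = complex_of_real (v x * u x)
     in vector
       [ (c - w) * P$3 + D$4,
         - D$3 + (- c - w) * P$4,
         - ((c - w) * P$1 + D$2 - g * (vv * P$1 - vu * P$2)),
         - (- D$1 + (- c - w) * P$2 - g * (- vu * P$1 + uu * P$2)) ])"

definition H1_eigenvalue ::
  "(real \<Rightarrow> real) \<Rightarrow> (real \<Rightarrow> real) \<Rightarrow> real \<Rightarrow> real \<Rightarrow>
   (real \<Rightarrow> real) \<Rightarrow> (real \<Rightarrow> real) \<Rightarrow> complex \<Rightarrow> bool"
where
  "H1_eigenvalue f fd m \<omega> v u lam \<longleftrightarrow>
    (\<exists>\<Psi> :: real \<Rightarrow> complex^4.
       (\<forall>x. \<Psi> differentiable (at x)) \<and>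
       (\<lambda>x. (norm (\<Psi> x))^2) integrable_on UNIV \<and>
       (\<lambda>x. (norm (vector_derivative \<Psi> (at x)))^2) integrable_on UNIV \<and>
       \<Psi> \<noteq> (\<lambda>x. 0) \<and>
       (\<forall>x. A_omega f fd m \<omega> v u \<Psi> x = lam *s \<Psi> x))"

end

theory Submission
  imports Defs
begin

lemma vector_4 [simp]:
 "(vector [x,y,z,w] ::('a::zero)^4)$1 = x"
 "(vector [x,y,z,w] ::('a::zero)^4)$2 = y"
 "(vector [x,y,z,w] ::('a::zero)^4)$3 = z"
 "(vector [x,y,z,w] ::('a::zero)^4)$4 = w"
  unfolding vector_def by simp_all

lemma exp_abs_integrable:
  fixes k :: real assumes k: "k > 0"
  shows "\<exists>G. G integrable_on UNIV \<and> (\<forall>x. exp (- k * \<bar>x\<bar>) \<le> G x)"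
proof -
  define h where "h = (\<lambda>x::real. if x \<in> {0..} then exp (- k * x) else 0)"
  have hi: "h integrable_on UNIV"
    unfolding h_def integrable_restrict_UNIV using integrable_on_exp_minus_to_infinity[OF k] by simp
  have ha: "h absolutely_integrable_on UNIV"
    by (rule nonnegative_absolutely_integrable_1[OF hi]) (auto simp: h_def)
  have "(\<lambda>x. h (-x)) absolutely_integrable_on UNIV"
    using has_absolute_integral_reflect_real[of UNIV UNIV h "integral UNIV h"] ha by auto
  then have hr: "(\<lambda>x. h (-x)) integrable_on UNIV"
    using absolutely_integrable_on_def by blast
  have "(\<lambda>x. h x + h (-x)) integrable_on UNIV" using hi hr by (rule integrable_add)
  moreover have "exp (- k * \<bar>x\<bar>) \<le> h x + h (-x)" for x
    by (cases "x \<ge> 0") (auto simp: h_def)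
  ultimately show ?thesis by blast
qed

lemma key:
  fixes f fd :: "real \<Rightarrow> real" and m \<omega> \<sigma> :: real and v u v' u' :: "real \<Rightarrow> real"
  assumes f_deriv: "\<And>s. (f has_real_derivative fd s) (at s)"
      and v_deriv: "\<And>x. (v has_real_derivative v' x) (at x)"
      and u_deriv: "\<And>x. (u has_real_derivative u' x) (at x)"
      and eq1: "\<And>x. \<omega> * v x = u' x + (m - f ((v x)^2 - (u x)^2)) * v x"
      and eq2: "\<And>x. \<omega> * u x = - v' x - (m - f ((v x)^2 - (u x)^2)) * u x"
      and decay: "\<exists>C \<kappa>. \<kappa> > 0 \<and> (\<forall>x. \<bar>v x\<bar> + \<bar>u x\<bar> \<le> C * exp (- \<kappa> * \<bar>x\<bar>))"
      and nontrivial: "\<exists>x. v x \<noteq> 0 \<or> u x \<noteq> 0"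
      and sig: "\<sigma> * \<sigma> = 1"
  shows "H1_eigenvalue f fd m \<omega> v u (2 * complex_of_real \<omega> * \<i> * complex_of_real \<sigma>)"
proof -
  obtain C \<kappa> where k: "\<kappa> > 0" and Cb: "\<And>x. \<bar>v x\<bar> + \<bar>u x\<bar> \<le> C * exp (- \<kappa> * \<bar>x\<bar>)"
    using decay by blast
  have vb: "\<bar>v x\<bar> \<le> C" and ub: "\<bar>u x\<bar> \<le> C" for x
  proof -
    have "C * exp (- \<kappa> * \<bar>x\<bar>) \<le> C"
    proof -
      have C0: "C \<ge> 0"
      proof (rule ccontr)
        assume "\<not> C \<ge> 0"
        then have "C * exp (- \<kappa> * \<bar>x\<bar>) < 0" by (simp add: mult_neg_pos)
        with Cb[of x] show False by linarith
      qed
      have "exp (- \<kappa> * \<bar>x\<bar>) \<le> 1" using k by (simp add: mult_nonneg_nonneg)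
      then show ?thesis using C0 by (simp add: mult_left_le)
    qed
    then show "\<bar>v x\<bar> \<le> C" "\<bar>u x\<bar> \<le> C" using Cb[of x] by linarith+
  qed
  have fc: "continuous_on UNIV f"
    using f_deriv by (meson DERIV_isCont continuous_at_imp_continuous_on)
  have "compact (f ` {-(C^2)..C^2})"
    by (rule compact_continuous_image) (use fc continuous_on_subset in auto)
  then obtain M where M: "\<And>t. t \<in> {-(C^2)..C^2} \<Longrightarrow> \<bar>f t\<bar> \<le> M"
  proof -
    assume H: "\<And>M. (\<And>t. t \<in> {-(C^2)..C^2} \<Longrightarrow> \<bar>f t\<bar> \<le> M) \<Longrightarrow> ?thesis"
    assume "compact (f ` {-(C^2)..C^2})"
    then obtain B where B: "\<forall>y\<in>f ` {-(C^2)..C^2}. norm y \<le> B"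
      using compact_imp_bounded bounded_iff by blast
    show ?thesis by (rule H[of B]) (use B in auto)
  qed
  have tau: "(v x)^2 - (u x)^2 \<in> {-(C^2)..C^2}" for x
  proof -
    have "(v x)^2 \<le> C^2" using vb[of x] by (metis abs_ge_zero power2_abs power_mono)
    moreover have "(u x)^2 \<le> C^2" using ub[of x] by (metis abs_ge_zero power2_abs power_mono)
    moreover have "0 \<le> (u x)^2" "0 \<le> (v x)^2" by simp_all
    ultimately show ?thesis unfolding atLeastAtMost_iff by linarith
  qed
  define K where "K = \<bar>\<omega>\<bar> + \<bar>m\<bar> + M"
  have u'e: "u' x = (\<omega> - (m - f ((v x)^2 - (u x)^2))) * v x" for x
    using eq1[of x] by (simp add: algebra_simps)
  have v'e: "v' x = - (\<omega> + (m - f ((v x)^2 - (u x)^2))) * u x" for x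
    using eq2[of x] by (simp add: algebra_simps)
  have cb: "\<bar>\<omega> - (m - f ((v x)^2 - (u x)^2))\<bar> \<le> K" "\<bar>\<omega> + (m - f ((v x)^2 - (u x)^2))\<bar> \<le> K" for x
    using M[OF tau[of x]] unfolding K_def by linarith+
  have u'b: "\<bar>u' x\<bar> \<le> K * \<bar>v x\<bar>" for x
    unfolding u'e abs_mult by (rule mult_right_mono[OF cb(1)]) simp
  have v'b: "\<bar>v' x\<bar> \<le> K * \<bar>u x\<bar>" for x
    unfolding v'e abs_mult abs_minus by (rule mult_right_mono[OF cb(2)]) simp
  define a :: "complex^4" where "a = vector [1, 0, - \<i> * \<sigma>, 0]"
  define b :: "complex^4" where "b = vector [0, 1, 0, - \<i> * \<sigma>]"
  define \<Psi> where "\<Psi> = (\<lambda>x. u x *\<^sub>R a + v x *\<^sub>R b)"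
  have Dh: "(\<Psi> has_vector_derivative (u' x *\<^sub>R a + v' x *\<^sub>R b)) (at x)" for x
  proof -
    have 1: "((\<lambda>x. u x *\<^sub>R a) has_vector_derivative u' x *\<^sub>R a) (at x)"
      using has_vector_derivative_scaleR[OF u_deriv has_vector_derivative_const] by simp
    have 2: "((\<lambda>x. v x *\<^sub>R b) has_vector_derivative v' x *\<^sub>R b) (at x)"
      using has_vector_derivative_scaleR[OF v_deriv has_vector_derivative_const] by simp
    show ?thesis unfolding \<Psi>_def by (rule has_vector_derivative_add[OF 1 2])
  qed
  have D: "vector_derivative \<Psi> (at x) = u' x *\<^sub>R a + v' x *\<^sub>R b" for x
    using Dh vector_derivative_at by blast
  define N where "N = norm a + norm b"
  have N0: "N \<ge> 0" unfolding N_def by simp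
  have nb: "norm (p *\<^sub>R a + q *\<^sub>R b) \<le> N * (\<bar>p\<bar> + \<bar>q\<bar>)" for p q
  proof -
    have "norm (p *\<^sub>R a + q *\<^sub>R b) \<le> \<bar>p\<bar> * norm a + \<bar>q\<bar> * norm b"
      by (metis norm_scaleR norm_triangle_ineq order_trans order_refl)
    also have "\<dots> \<le> N * (\<bar>p\<bar> + \<bar>q\<bar>)"
      unfolding N_def by (simp add: algebra_simps add_mono mult_left_mono)
    finally show ?thesis .
  qed
  obtain G where G: "G integrable_on UNIV" "\<And>x. exp (- (2*\<kappa>) * \<bar>x\<bar>) \<le> G x"
    using exp_abs_integrable[of "2*\<kappa>"] k by auto
  have sqb: "(\<bar>v x\<bar> + \<bar>u x\<bar>)^2 \<le> C^2 * G x" for x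
  proof -
    have "(\<bar>v x\<bar> + \<bar>u x\<bar>)^2 \<le> (C * exp (- \<kappa> * \<bar>x\<bar>))^2"
      using Cb[of x] by (intro power_mono) auto
    also have "\<dots> = C^2 * exp (- (2*\<kappa>) * \<bar>x\<bar>)"
      by (simp add: power_mult_distrib power2_eq_square exp_add[symmetric])
    also have "\<dots> \<le> C^2 * G x" using G(2)[of x] by (simp add: mult_left_mono)
    finally show ?thesis .
  qed
  have contv: "continuous_on UNIV v" and contu: "continuous_on UNIV u"
    using v_deriv u_deriv by (meson DERIV_isCont continuous_at_imp_continuous_on)+
  have contf: "continuous_on UNIV (\<lambda>x. f ((v x)^2 - (u x)^2))"
    by (intro continuous_on_compose2[OF fc] continuous_intros contv contu) auto
  have int1: "(\<lambda>x. (norm (\<Psi> x))^2) integrable_on UNIV"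
  proof (rule measurable_bounded_by_integrable_imp_integrable)
    show "(\<lambda>x. (norm (\<Psi> x))^2) \<in> borel_measurable (lebesgue_on UNIV)"
      unfolding \<Psi>_def
      by (intro continuous_imp_measurable_on_sets_lebesgue continuous_intros contv contu) auto
    show "(\<lambda>x. (N^2 * C^2) * G x) integrable_on UNIV" using integrable_on_cmult_left[OF G(1)] by simp
    show "norm ((norm (\<Psi> x))^2) \<le> (N^2 * C^2) * G x" for x
    proof -
      have "(norm (\<Psi> x))^2 \<le> (N * (\<bar>u x\<bar> + \<bar>v x\<bar>))^2"
        unfolding \<Psi>_def by (intro power_mono nb) simp
      also have "\<dots> = N^2 * (\<bar>v x\<bar> + \<bar>u x\<bar>)^2" by (simp add: power_mult_distrib add.commute)
      also have "\<dots> \<le> N^2 * (C^2 * G x)" by (intro mult_left_mono sqb) simp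
      finally show ?thesis by (simp add: mult.assoc)
    qed
  qed simp
  have int2: "(\<lambda>x. (norm (vector_derivative \<Psi> (at x)))^2) integrable_on UNIV"
  proof (rule measurable_bounded_by_integrable_imp_integrable)
    show "(\<lambda>x. (norm (vector_derivative \<Psi> (at x)))^2) \<in> borel_measurable (lebesgue_on UNIV)"
      unfolding D u'e v'e
      by (intro continuous_imp_measurable_on_sets_lebesgue continuous_intros contv contu contf) auto
    show "(\<lambda>x. (N^2 * K^2 * C^2) * G x) integrable_on UNIV" using integrable_on_cmult_left[OF G(1)] by simp
    show "norm ((norm (vector_derivative \<Psi> (at x)))^2) \<le> (N^2 * K^2 * C^2) * G x" for x
    proof -
      have K0: "K \<ge> 0" using cb(1)[of x] by linarith
      have "(norm (vector_derivative \<Psi> (at x)))^2 \<le> (N * (\<bar>u' x\<bar> + \<bar>v' x\<bar>))^2"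
        unfolding D by (intro power_mono nb) simp
      also have "\<dots> \<le> (N * (K * (\<bar>v x\<bar> + \<bar>u x\<bar>)))^2"
        using u'b[of x] v'b[of x] N0 by (intro power_mono mult_left_mono) (auto simp: algebra_simps)
      also have "\<dots> = N^2 * K^2 * (\<bar>v x\<bar> + \<bar>u x\<bar>)^2" by (simp add: power_mult_distrib)
      also have "\<dots> \<le> N^2 * K^2 * (C^2 * G x)" by (intro mult_left_mono sqb) simp
      finally show ?thesis by (simp add: mult.assoc)
    qed
  qed simp
  have nz: "\<Psi> \<noteq> (\<lambda>x. 0)"
  proof
    assume z: "\<Psi> = (\<lambda>x. 0)"
    obtain x where "v x \<noteq> 0 \<or> u x \<noteq> 0" using nontrivial by blast
    moreover have "\<Psi> x $ 1 = 0" "\<Psi> x $ 2 = 0" using z by auto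
    ultimately show False by (auto simp: \<Psi>_def a_def b_def)
  qed
  have diffb: "\<Psi> differentiable (at x)" for x
    using Dh by (meson differentiableI_vector)
  have eig: "A_omega f fd m \<omega> v u \<Psi> x = (2 * complex_of_real \<omega> * \<i> * complex_of_real \<sigma>) *s \<Psi> x" for x
  proof -
    have sig': "complex_of_real \<sigma> * complex_of_real \<sigma> = 1"
      by (metis of_real_1 of_real_mult sig)
    show ?thesis
    proof -
      let ?t = "(v x)^2 - (u x)^2"
      have P: "\<Psi> x $ 1 = of_real (u x)" "\<Psi> x $ 2 = of_real (v x)"
        "\<Psi> x $ 3 = - \<i> * of_real \<sigma> * of_real (u x)" "\<Psi> x $ 4 = - \<i> * of_real \<sigma> * of_real (v x)"
        unfolding \<Psi>_def by (simp_all only: vector_add_component vector_scaleR_component) (simp_all add: a_def b_def scaleR_conv_of_real)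
      have Q: "vector_derivative \<Psi> (at x) $ 1 = of_real (u' x)" "vector_derivative \<Psi> (at x) $ 2 = of_real (v' x)"
        "vector_derivative \<Psi> (at x) $ 3 = - \<i> * of_real \<sigma> * of_real (u' x)" "vector_derivative \<Psi> (at x) $ 4 = - \<i> * of_real \<sigma> * of_real (v' x)"
        unfolding D by (simp_all only: vector_add_component vector_scaleR_component) (simp_all add: a_def b_def scaleR_conv_of_real)
      have u'c: "complex_of_real (u' x) = (of_real \<omega> - (of_real m - of_real (f ?t))) * of_real (v x)"
        using u'e[of x] by simp
      have v'c: "complex_of_real (v' x) = - (of_real \<omega> + (of_real m - of_real (f ?t))) * of_real (u x)"
        using v'e[of x] by simp
      show ?thesis
        unfolding A_omega_def Let_def vec_eq_iff forall_4
        apply (simp only: P Q vector_4 vector_scalar_mult_def vec_lambda_beta u'c v'c)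
        apply (intro conjI)
        subgoal by (simp add: algebra_simps)
        subgoal by (simp add: algebra_simps)
        subgoal
          proof -
            have "complex_of_real \<omega> * \<i> * (complex_of_real \<sigma> * \<i> * complex_of_real \<sigma>) = - of_real \<omega>"
              using sig' by (simp add: algebra_simps)
            then show ?thesis using sig' by (simp add: algebra_simps power2_eq_square)
          qed
        subgoal
          proof -
            have "complex_of_real \<omega> * \<i> * (complex_of_real \<sigma> * \<i> * complex_of_real \<sigma>) = - of_real \<omega>"
              using sig' by (simp add: algebra_simps)
            then show ?thesis using sig' by (simp add: algebra_simps power2_eq_square)
          qed
        done
    qed
  qed
  show ?thesis unfolding H1_eigenvalue_def
    using diffb int1 int2 nz eig by blast
qed


theorem mainTheorem5:
  fixes f fd :: "real \<Rightarrow> real" and m \<omega> :: real and v u v' u' :: "real \<Rightarrow> real"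
  assumes f_deriv: "\<And>s. (f has_real_derivative fd s) (at s)"
      and fd_cont: "continuous_on UNIV fd"
      and f0: "f 0 = 0"
      and m_pos: "m > 0"
      and \<omega>_pos: "0 < \<omega>" and \<omega>_lt: "\<omega> < m"
      and v_deriv: "\<And>x. (v has_real_derivative v' x) (at x)"
      and u_deriv: "\<And>x. (u has_real_derivative u' x) (at x)"
      and eq1: "\<And>x. \<omega> * v x = u' x + (m - f ((v x)^2 - (u x)^2)) * v x"
      and eq2: "\<And>x. \<omega> * u x = - v' x - (m - f ((v x)^2 - (u x)^2)) * u x"
      and decay: "\<exists>C \<kappa>. \<kappa> > 0 \<and> (\<forall>x. \<bar>v x\<bar> + \<bar>u x\<bar> \<le> C * exp (- \<kappa> * \<bar>x\<bar>))"
      and nontrivial: "\<exists>x. v x \<noteq> 0 \<or> u x \<noteq> 0"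
  shows "H1_eigenvalue f fd m \<omega> v u (2 * complex_of_real \<omega> * \<i>)
       \<and> H1_eigenvalue f fd m \<omega> v u (- 2 * complex_of_real \<omega> * \<i>)"
proof -
  have a: "H1_eigenvalue f fd m \<omega> v u (2 * complex_of_real \<omega> * \<i> * complex_of_real 1)"
    by (rule key[OF f_deriv v_deriv u_deriv eq1 eq2 decay nontrivial]) simp
  have b: "H1_eigenvalue f fd m \<omega> v u (2 * complex_of_real \<omega> * \<i> * complex_of_real (-1))"
    by (rule key[OF f_deriv v_deriv u_deriv eq1 eq2 decay nontrivial]) simp
  show ?thesis using a b by simp
qed

end
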